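(* Adopt the following setting with $n_p=2$. Let $P\subset\mathbb{R}^{2}$ be convex and compact, $\mathbf{f}:\mathbb{R}^{n_x}\times\mathbb{R}^2\to\mathbb{R}^{n_x}$, $Q\subset P$ the nonempty set of $\mathbf{p}\in P$ for which $\mathbf{f}(\mathbf{z},\mathbf{p})=\mathbf{0}$ has a solution, $\mathbf{x}:Q\to\mathbb{R}^{n_x}$ with $\mathbf{f}(\mathbf{x}(\mathbf{p}),\mathbf{p})=\mathbf{0}$, and $X=[\mathbf{x}^L,\mathbf{x}^U]$ with $\mathbf{x}(\mathbf{p})\in X$ for $\mathbf{p}\in Q$. Write $\mathbf{f}=(\tilde{\mathbf{f}},\mathbf{h})$ with $\mathbf{h}$ affine (values in $\mathbb{R}^{n_h}$) and no component of $\tilde{\mathbf{f}}$ affine; for each $\tilde i$ let $\tilde f_{\tilde i}^{cv}=\max_j\tilde f_{\tilde i}^{cv,j}$, $\tilde f_{\tilde i}^{cc}=\min_j\tilde f_{\tilde i}^{cc,j}$ be convex/concave relaxations of $\tilde f_{\tilde i}$ on $X\times P$ with finitely many continuously differentiable convex pieces $\tilde f_{\tilde i}^{cv,j}$ and concave pieces $\tilde f_{\tilde i}^{cc,j}$. Let $\mathbf{g}$ collect all $\tilde f_{\tilde i}^{cv,j}$, $-\tilde f_{\tilde i}^{cc,j}$, $\mathbf{x}^L-\boldsymbol\xi$ and $\boldsymbol\xi-\mathbf{x}^U$. Fix $i$ and define $x_i^{cv}(\mathbf{p}):=\min\{\xi_i:\boldsymbol\xi\in\mathbb{R}^{n_x},\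 \mathbf{h}(\boldsymbol\xi,\mathbf{p})=\mathbf{0},\ \mathbf{g}(\boldsymbol\xi,\mathbf{p})\le\mathbf{0}\}$. Let $\hat{\mathbf{p}}\in\mathrm{int}(Q)$, suppose the gradients $\nabla_{\boldsymbol\xi}h_k$ ($k=1,\dots,n_h$) are linearly independent, and suppose there is a neighborhood $N\subset Q$ of $\hat{\mathbf{p}}$ such that each $\mathbf{p}\in N$ admits $\boldsymbol\xi_{\mathbf{p}}\in X$ with $\mathbf{h}(\boldsymbol\xi_{\mathbf{p}},\mathbf{p})=\mathbf{0}$ and $\mathbf{g}(\boldsymbol\xi_{\mathbf{p}},\mathbf{p})<\mathbf{0}$. Then $$\frac12\begin{bmatrix}[x_i^{cv}]'(\hat{\mathbf{p}};\mathbf{e}^{(1)})-[x_i^{cv}]'(\hat{\mathbf{p}};-\mathbf{e}^{(1)})\\ [x_i^{cv}]'(\hat{\mathbf{p}};\mathbf{e}^{(2)})-[x_i^{cv}]'(\hat{\mathbf{p}};-\mathbf{e}^{(2)})\end{bmatrix}$$ is a subgradient of $x_i^{cv}$ at $\hat{\mathbf{p}}$.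
   Context: $\mathbf{e}^{(1)},\mathbf{e}^{(2)}$ are the unit coordinate vectors in $\mathbb{R}^2$. Inequalities between vectors are componentwise. Convex (concave) relaxation of $\phi$ on $X\times P$: a convex function $\le\phi$ (concave function $\ge\phi$) there. $[\phi]'(\mathbf{p};\mathbf{d})=\lim_{\alpha\downarrow0}(\phi(\mathbf{p}+\alpha\mathbf{d})-\phi(\mathbf{p}))/\alpha$. A subgradient of the convex function $x_i^{cv}$ at $\hat{\mathbf{p}}$ is $\mathbf{s}$ with $x_i^{cv}(\boldsymbol\eta)\ge x_i^{cv}(\hat{\mathbf{p}})+\langle\mathbf{s},\boldsymbol\eta-\hat{\mathbf{p}}\rangle$ for all $\boldsymbol\eta$ in the domain. *)

theory Defs
  imports "HOL-Analysis.Analysis"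
begin

definition affine_fun :: "('a::real_inner \<Rightarrow> real) \<Rightarrow> bool" where
  "affine_fun \<phi> \<longleftrightarrow> (\<exists>a c. \<forall>w. \<phi> w = inner a w + c)"

definition C1_on :: "'a::real_inner set \<Rightarrow> ('a \<Rightarrow> real) \<Rightarrow> bool" where
  "C1_on U \<phi> \<longleftrightarrow> (\<exists>D. (\<forall>w\<in>U. GDERIV \<phi> w :> D w) \<and> continuous_on U D)"

definition feas ::
  "'n set \<Rightarrow> (real^'n \<Rightarrow> real^2 \<Rightarrow> real^'n)
   \<Rightarrow> ('n \<Rightarrow> nat) \<Rightarrow> ('n \<Rightarrow> nat \<Rightarrow> real^'n \<Rightarrow> real^2 \<Rightarrow> real)
   \<Rightarrow> ('n \<Rightarrow> nat) \<Rightarrow> ('n \<Rightarrow> nat \<Rightarrow> real^'n \<Rightarrow> real^2 \<Rightarrow> real)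
   \<Rightarrow> real^'n \<Rightarrow> real^'n \<Rightarrow> real^2 \<Rightarrow> (real^'n) set" where
  "feas H f mcv fcv mcc fcc xL xU p =
     {\<xi>. (\<forall>k\<in>H. f \<xi> p $ k = 0)
        \<and> (\<forall>k. k \<notin> H \<longrightarrow> (\<forall>j<mcv k. fcv k j \<xi> p \<le> 0) \<and> (\<forall>j<mcc k. - fcc k j \<xi> p \<le> 0))
        \<and> (\<forall>l. xL $ l - \<xi> $ l \<le> 0) \<and> (\<forall>l. \<xi> $ l - xU $ l \<le> 0)}"

definition xcv ::
  "'n set \<Rightarrow> (real^'n \<Rightarrow> real^2 \<Rightarrow> real^'n)
   \<Rightarrow> ('n \<Rightarrow> nat) \<Rightarrow> ('n \<Rightarrow> nat \<Rightarrow> real^'n \<Rightarrow> real^2 \<Rightarrow> real)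
   \<Rightarrow> ('n \<Rightarrow> nat) \<Rightarrow> ('n \<Rightarrow> nat \<Rightarrow> real^'n \<Rightarrow> real^2 \<Rightarrow> real)
   \<Rightarrow> real^'n \<Rightarrow> real^'n \<Rightarrow> 'n \<Rightarrow> real^2 \<Rightarrow> real" where
  "xcv H f mcv fcv mcc fcc xL xU i p =
     Inf ((\<lambda>\<xi>. \<xi> $ i) ` feas H f mcv fcv mcc fcc xL xU p)"

definition has_dirderiv :: "(real^2 \<Rightarrow> real) \<Rightarrow> real^2 \<Rightarrow> real^2 \<Rightarrow> real \<Rightarrow> bool" where
  "has_dirderiv \<phi> p d l \<longleftrightarrow> ((\<lambda>\<alpha>. (\<phi> (p + \<alpha> *\<^sub>R d) - \<phi> p) / \<alpha>) \<longlongrightarrow> l) (at_right 0)"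

definition dirderiv :: "(real^2 \<Rightarrow> real) \<Rightarrow> real^2 \<Rightarrow> real^2 \<Rightarrow> real" where
  "dirderiv \<phi> p d = Lim (at_right 0) (\<lambda>\<alpha>. (\<phi> (p + \<alpha> *\<^sub>R d) - \<phi> p) / \<alpha>)"

end

theory Submission
  imports Defs
begin

lemma dd_exists:
  fixes \<phi> :: "real^2 \<Rightarrow> real"
  assumes cv: "convex_on S \<phi>" and r: "r > 0" and B: "ball p r \<subseteq> S"
  shows "\<exists>l. has_dirderiv \<phi> p d l"
proof (cases "d = 0")
  case True
  then show ?thesis unfolding has_dirderiv_def by auto
next
  case False
  define \<delta> where "\<delta> = r / norm d"
  have dpos: "\<delta> > 0" using False r by (simp add: \<delta>_def)
  define g where "g \<alpha> = (\<phi> (p + \<alpha> *\<^sub>R d) - \<phi> p) / \<alpha>" for \<alpha>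
  have inS: "p + \<alpha> *\<^sub>R d \<in> S" if "\<bar>\<alpha>\<bar> < \<delta>" for \<alpha>
  proof -
    have "\<bar>\<alpha>\<bar> * norm d < r" using that False by (simp add: \<delta>_def pos_less_divide_eq)
    then have "p + \<alpha> *\<^sub>R d \<in> ball p r" by (simp add: dist_norm)
    then show ?thesis using B by auto
  qed
  have mono: "g a \<le> g b" if "0 < a" "a \<le> b" "b < \<delta>" for a b
  proof -
    have eq: "p + a *\<^sub>R d = (1 - a/b) *\<^sub>R p + (a/b) *\<^sub>R (p + b *\<^sub>R d)"
      using that by (simp add: algebra_simps)
    have "\<phi> (p + a *\<^sub>R d) \<le> (1 - a/b) * \<phi> p + (a/b) * \<phi> (p + b *\<^sub>R d)"
      unfolding eq using that dpos
      by (intro convex_onD[OF cv]) (auto intro!: inS[of 0, simplified] inS)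
    then have "\<phi> (p + a *\<^sub>R d) - \<phi> p \<le> (a/b) * (\<phi> (p + b *\<^sub>R d) - \<phi> p)"
      by (simp add: algebra_simps)
    then have "(\<phi> (p + a *\<^sub>R d) - \<phi> p) / a \<le> (\<phi> (p + b *\<^sub>R d) - \<phi> p) / b"
      using that by (simp add: field_simps)
    then show ?thesis by (simp add: g_def)
  qed
  define \<beta> where "\<beta> = \<delta> / 2"
  define m where "m = (\<phi> p - \<phi> (p - \<beta> *\<^sub>R d)) / \<beta>"
  have low: "m \<le> g a" if "0 < a" "a < \<delta>" for a
  proof -
    define t where "t = \<beta> / (a + \<beta>)"
    have bp: "\<beta> > 0" using dpos by (simp add: \<beta>_def)
    have eq: "p = (1 - t) *\<^sub>R (p - \<beta> *\<^sub>R d) + t *\<^sub>R (p + a *\<^sub>R d)"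
    proof -
      have "(1 - t) * \<beta> = t * a" using that bp by (simp add: t_def field_simps)
      moreover have "(1 - t) *\<^sub>R (p - \<beta> *\<^sub>R d) + t *\<^sub>R (p + a *\<^sub>R d) = p + (t*a - (1-t)*\<beta>) *\<^sub>R d"
        by (simp add: algebra_simps)
      ultimately show ?thesis by simp
    qed
    have t01: "0 \<le> t" "t \<le> 1" using that bp by (auto simp: t_def)
    have m1: "p - \<beta> *\<^sub>R d \<in> S" using inS[of "-\<beta>"] bp dpos by (simp add: \<beta>_def)
    have "\<phi> p \<le> (1 - t) * \<phi> (p - \<beta> *\<^sub>R d) + t * \<phi> (p + a *\<^sub>R d)"
      by (subst eq, rule convex_onD[OF cv t01 m1 inS]) (use that in auto)
    moreover have "1 - t = a / (a + \<beta>)" using that bp by (simp add: t_def field_simps)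
    ultimately have "\<phi> p \<le> (a * \<phi> (p - \<beta> *\<^sub>R d) + \<beta> * \<phi> (p + a *\<^sub>R d)) / (a + \<beta>)"
      by (simp add: t_def add_divide_distrib)
    then have "(a + \<beta>) * \<phi> p \<le> a * \<phi> (p - \<beta> *\<^sub>R d) + \<beta> * \<phi> (p + a *\<^sub>R d)"
      using that bp by (simp add: pos_le_divide_eq mult.commute)
    then have "a * (\<phi> p - \<phi> (p - \<beta> *\<^sub>R d)) \<le> \<beta> * (\<phi> (p + a *\<^sub>R d) - \<phi> p)"
      by (simp add: algebra_simps)
    then show ?thesis using that bp by (simp add: m_def g_def field_simps)
  qed
  define L where "L = Inf (g ` {0<..<\<delta>})"
  have ne: "g ` {0<..<\<delta>} \<noteq> {}" using dpos by auto
  have bdd: "bdd_below (g ` {0<..<\<delta>})" using low by (auto intro!: bdd_belowI2)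
  have "(g \<longlongrightarrow> L) (at_right 0)"
  proof (rule order_tendstoI)
    fix y assume "y < L"
    have "\<forall>\<alpha>\<in>{0<..<\<delta>}. y < g \<alpha>"
      using \<open>y < L\<close> cInf_lower[OF _ bdd] unfolding L_def by (meson image_eqI less_le_trans)
    then show "\<forall>\<^sub>F \<alpha> in at_right 0. y < g \<alpha>"
      using eventually_at_right_real[OF dpos] by (auto elim: eventually_mono)
  next
    fix y assume "L < y"
    then obtain z where z: "z \<in> g ` {0<..<\<delta>}" "z < y"
      using cInf_lessD[OF ne] unfolding L_def by blast
    then obtain a where a: "0 < a" "a < \<delta>" "g a < y" by auto
    show "\<forall>\<^sub>F \<alpha> in at_right 0. g \<alpha> < y"
      using eventually_at_right_real[OF a(1)]
    proof (rule eventually_mono)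
      fix x assume "x \<in> {0<..<a}"
      then have "g x \<le> g a" using mono[of x a] a by auto
      then show "g x < y" using a by simp
    qed
  qed
  then show ?thesis unfolding has_dirderiv_def g_def by blast
qed

lemma dd_has:
  fixes \<phi> :: "real^2 \<Rightarrow> real"
  assumes cv: "convex_on S \<phi>" and r: "r > 0" and B: "ball p r \<subseteq> S"
  shows "has_dirderiv \<phi> p d (dirderiv \<phi> p d)"
proof -
  obtain l where l: "has_dirderiv \<phi> p d l" using dd_exists[OF cv r B] by blast
  then have "dirderiv \<phi> p d = l" unfolding has_dirderiv_def dirderiv_def
    by (intro tendsto_Lim) auto
  then show ?thesis using l by simp
qed

lemma dd_homog:
  fixes \<phi> :: "real^2 \<Rightarrow> real"
  assumes cv: "convex_on S \<phi>" and r: "r > 0" and B: "ball p r \<subseteq> S" and c: "c \<ge> 0"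
  shows "dirderiv \<phi> p (c *\<^sub>R d) = c * dirderiv \<phi> p d"
proof (cases "c = 0")
  case True
  have "has_dirderiv \<phi> p 0 0" unfolding has_dirderiv_def by simp
  then show ?thesis using True dd_has[OF cv r B, of 0] unfolding has_dirderiv_def
    by (auto intro: tendsto_unique[OF trivial_limit_at_right_real])
next
  case False
  then have cp: "c > 0" using c by simp
  define g where "g \<alpha> = (\<phi> (p + \<alpha> *\<^sub>R d) - \<phi> p) / \<alpha>" for \<alpha>
  have gl: "(g \<longlongrightarrow> dirderiv \<phi> p d) (at_right 0)"
    using dd_has[OF cv r B, of d] unfolding has_dirderiv_def g_def .
  have fl: "filterlim (\<lambda>\<alpha>. c * \<alpha>) (at_right 0) (at_right 0)"
    unfolding filterlim_at
  proof
    show "\<forall>\<^sub>F x in at_right 0. c * x \<in> {0<..} \<and> c * x \<noteq> 0"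
      using eventually_at_right_real[of 0 1] by (rule eventually_mono) (use cp in auto)
    have "((\<lambda>\<alpha>. c * \<alpha>) \<longlongrightarrow> c * 0) (at_right 0)"
      by (intro tendsto_intros)
    then show "((\<lambda>\<alpha>. c * \<alpha>) \<longlongrightarrow> 0) (at_right (0::real))" by simp
  qed
  have "((\<lambda>\<alpha>. c * g (c * \<alpha>)) \<longlongrightarrow> c * dirderiv \<phi> p d) (at_right 0)"
    by (intro tendsto_mult_left filterlim_compose[OF gl fl])
  moreover have "(\<lambda>\<alpha>. c * g (c * \<alpha>)) = (\<lambda>\<alpha>. (\<phi> (p + \<alpha> *\<^sub>R (c *\<^sub>R d)) - \<phi> p) / \<alpha>)"
    using cp by (auto simp: g_def fun_eq_iff mult.commute)
  ultimately have "has_dirderiv \<phi> p (c *\<^sub>R d) (c * dirderiv \<phi> p d)"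
    unfolding has_dirderiv_def by simp
  then show ?thesis using dd_has[OF cv r B, of "c *\<^sub>R d"] unfolding has_dirderiv_def
    by (auto intro: tendsto_unique[OF trivial_limit_at_right_real])
qed

lemma dd_subadd:
  fixes \<phi> :: "real^2 \<Rightarrow> real"
  assumes cv: "convex_on S \<phi>" and r: "r > 0" and B: "ball p r \<subseteq> S"
  shows "dirderiv \<phi> p (d1 + d2) \<le> dirderiv \<phi> p d1 + dirderiv \<phi> p d2"
proof -
  define e where "e = r / (norm d1 + norm d2 + 1)"
  have "norm d1 + norm d2 + 1 > 0" by (smt (verit) norm_ge_zero)
  then have ep: "e > 0" using r by (simp add: e_def)
  have npos: "norm d1 + norm d2 + 1 > 0" by (smt (verit) norm_ge_zero)
  have inS: "p + \<alpha> *\<^sub>R d \<in> S" if "0 < \<alpha>" "\<alpha> < e" "norm d \<le> norm d1 + norm d2" for \<alpha> d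
  proof -
    have "\<alpha> * norm d \<le> \<alpha> * (norm d1 + norm d2)" using that by (simp add: mult_left_mono)
    also have "\<dots> < \<alpha> * (norm d1 + norm d2 + 1)" using that by simp
    also have "\<dots> < r" using that npos by (simp add: e_def pos_less_divide_eq mult.commute)
    finally have "p + \<alpha> *\<^sub>R d \<in> ball p r" using that by (simp add: dist_norm)
    then show ?thesis using B by auto
  qed
  let ?dm = "(1/2::real) *\<^sub>R (d1 + d2)"
  have ev: "\<forall>\<^sub>F \<alpha> in at_right 0. (\<phi> (p + \<alpha> *\<^sub>R ?dm) - \<phi> p) / \<alpha>
      \<le> ((\<phi> (p + \<alpha> *\<^sub>R d1) - \<phi> p) / \<alpha> + (\<phi> (p + \<alpha> *\<^sub>R d2) - \<phi> p) / \<alpha>) / 2"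
    using eventually_at_right_real[OF ep]
  proof (rule eventually_mono)
    fix \<alpha> assume a: "\<alpha> \<in> {0<..<e}"
    have eq: "p + \<alpha> *\<^sub>R ?dm = (1 - 1/2) *\<^sub>R (p + \<alpha> *\<^sub>R d1) + (1/2) *\<^sub>R (p + \<alpha> *\<^sub>R d2)"
      unfolding vec_eq_iff by (simp add: field_simps)
    have "\<phi> (p + \<alpha> *\<^sub>R ?dm) \<le> (1 - 1/2) * \<phi> (p + \<alpha> *\<^sub>R d1) + (1/2) * \<phi> (p + \<alpha> *\<^sub>R d2)"
      unfolding eq using a by (intro convex_onD[OF cv] inS) auto
    then show "(\<phi> (p + \<alpha> *\<^sub>R ?dm) - \<phi> p) / \<alpha>
      \<le> ((\<phi> (p + \<alpha> *\<^sub>R d1) - \<phi> p) / \<alpha> + (\<phi> (p + \<alpha> *\<^sub>R d2) - \<phi> p) / \<alpha>) / 2"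
    proof -
      have k: "((B-q)/\<alpha> + (C-q)/\<alpha>)/2 = (((1-1/2)*B + 1/2*C) - q)/\<alpha>" for B C q :: real
        using a by (simp add: field_simps)
      show ?thesis unfolding k using a \<open>\<phi> (p + \<alpha> *\<^sub>R ?dm) \<le> _\<close>
        by (intro divide_right_mono) auto
    qed
  qed
  have "dirderiv \<phi> p ?dm \<le> (dirderiv \<phi> p d1 + dirderiv \<phi> p d2) / 2"
  proof (rule tendsto_le[OF trivial_limit_at_right_real _ _ ev])
    show "((\<lambda>\<alpha>. (\<phi> (p + \<alpha> *\<^sub>R ?dm) - \<phi> p) / \<alpha>) \<longlongrightarrow> dirderiv \<phi> p ?dm) (at_right 0)"
      using dd_has[OF cv r B, of ?dm] unfolding has_dirderiv_def .
    show "((\<lambda>\<alpha>. ((\<phi> (p + \<alpha> *\<^sub>R d1) - \<phi> p) / \<alpha> + (\<phi> (p + \<alpha> *\<^sub>R d2) - \<phi> p) / \<alpha>) / 2)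
       \<longlongrightarrow> (dirderiv \<phi> p d1 + dirderiv \<phi> p d2) / 2) (at_right 0)"
      using dd_has[OF cv r B, of d1] dd_has[OF cv r B, of d2] unfolding has_dirderiv_def
      by (intro tendsto_intros) simp_all
  qed
  moreover have "d1 + d2 = (2::real) *\<^sub>R ?dm" by simp
  ultimately show ?thesis using dd_homog[OF cv r B, of 2 ?dm] by simp
qed

lemma dd_le:
  fixes \<phi> :: "real^2 \<Rightarrow> real"
  assumes cv: "convex_on S \<phi>" and r: "r > 0" and B: "ball p r \<subseteq> S" and eta: "\<eta> \<in> S"
  shows "dirderiv \<phi> p (\<eta> - p) \<le> \<phi> \<eta> - \<phi> p"
proof -
  have pS: "p \<in> S" using B r by auto
  have ev: "\<forall>\<^sub>F \<alpha> in at_right 0. (\<phi> (p + \<alpha> *\<^sub>R (\<eta> - p)) - \<phi> p) / \<alpha> \<le> \<phi> \<eta> - \<phi> p"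
    using eventually_at_right_real[of 0 1, OF zero_less_one]
  proof (rule eventually_mono)
    fix \<alpha> :: real assume a: "\<alpha> \<in> {0<..<1}"
    have eq: "p + \<alpha> *\<^sub>R (\<eta> - p) = (1 - \<alpha>) *\<^sub>R p + \<alpha> *\<^sub>R \<eta>" by (simp add: algebra_simps)
    have "\<phi> (p + \<alpha> *\<^sub>R (\<eta> - p)) \<le> (1 - \<alpha>) * \<phi> p + \<alpha> * \<phi> \<eta>"
      unfolding eq using a pS eta by (intro convex_onD[OF cv]) auto
    then show "(\<phi> (p + \<alpha> *\<^sub>R (\<eta> - p)) - \<phi> p) / \<alpha> \<le> \<phi> \<eta> - \<phi> p"
      using a by (simp add: field_simps)
  qed
  show ?thesis
    by (rule tendsto_le[OF trivial_limit_at_right_real tendsto_const _ ev])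
      (use dd_has[OF cv r B] in \<open>auto simp: has_dirderiv_def\<close>)
qed

lemma dd_odd:
  fixes \<phi> :: "real^2 \<Rightarrow> real"
  assumes cv: "convex_on S \<phi>" and r: "r > 0" and B: "ball p r \<subseteq> S"
  shows "dirderiv \<phi> p (c *\<^sub>R e) - dirderiv \<phi> p (- (c *\<^sub>R e)) = c * (dirderiv \<phi> p e - dirderiv \<phi> p (- e))"
proof (cases "c \<ge> 0")
  case True
  have a: "dirderiv \<phi> p (c *\<^sub>R e) = c * dirderiv \<phi> p e" by (rule dd_homog[OF cv r B True])
  have b: "dirderiv \<phi> p (- (c *\<^sub>R e)) = c * dirderiv \<phi> p (- e)"
    using dd_homog[OF cv r B True, of "- e"] by simp
  show ?thesis unfolding a b by (simp add: right_diff_distrib)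
next
  case False
  then have c: "-c \<ge> 0" by simp
  have a: "dirderiv \<phi> p (c *\<^sub>R e) = (-c) * dirderiv \<phi> p (- e)"
    using dd_homog[OF cv r B c, of "- e"] by simp
  have b: "dirderiv \<phi> p (- (c *\<^sub>R e)) = (-c) * dirderiv \<phi> p e"
    using dd_homog[OF cv r B c, of e] by simp
  show ?thesis unfolding a b by (simp add: algebra_simps)
qed

lemma dd_subgrad:
  fixes \<phi> :: "real^2 \<Rightarrow> real"
  assumes cv: "convex_on S \<phi>" and r: "r > 0" and B: "ball p r \<subseteq> S" and eta: "\<eta> \<in> S"
  shows "\<phi> \<eta> \<ge> \<phi> p + inner (\<chi> k::2. (dirderiv \<phi> p (axis k 1) - dirderiv \<phi> p (- axis k 1)) / 2) (\<eta> - p)"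
proof -
  define w where "w = \<eta> - p"
  define u where "u = w $ 1"
  define v where "v = w $ 2"
  define e1 :: "real^2" where "e1 = axis 1 1"
  define e2 :: "real^2" where "e2 = axis 2 1"
  let ?L = "dirderiv \<phi> p"
  have wd: "w = u *\<^sub>R e1 + v *\<^sub>R e2"
    unfolding vec_eq_iff forall_2 u_def v_def e1_def e2_def by (simp add: axis_def)
  have e2w: "v *\<^sub>R e2 = w + (- (u *\<^sub>R e1))" using wd by simp
  have i1: "?L (v *\<^sub>R e2) \<le> ?L w + ?L (- (u *\<^sub>R e1))"
    unfolding e2w by (rule dd_subadd[OF cv r B])
  have e1w: "u *\<^sub>R e1 = w + (- (v *\<^sub>R e2))" using wd by simp
  have i2: "?L (u *\<^sub>R e1) \<le> ?L w + ?L (- (v *\<^sub>R e2))"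
    unfolding e1w by (rule dd_subadd[OF cv r B])
  note o1 = dd_odd[OF cv r B, of u e1]
  note o2 = dd_odd[OF cv r B, of v e2]
  have "inner (\<chi> k::2. (?L (axis k 1) - ?L (- axis k 1)) / 2) w
      = u * (?L e1 - ?L (-e1)) / 2 + v * (?L e2 - ?L (-e2)) / 2"
    unfolding inner_vec_def sum_2 u_def v_def e1_def e2_def by (simp add: mult.commute)
  also have "\<dots> \<le> ?L w" 
  proof -
    have "?L (u *\<^sub>R e1) + ?L (v *\<^sub>R e2) - ?L (- (u *\<^sub>R e1)) - ?L (- (v *\<^sub>R e2)) \<le> 2 * ?L w"
      using add_mono[OF i1 i2] by simp
    then show ?thesis unfolding o1[symmetric] o2[symmetric] using [[show_types, show_sorts]] by (simp add: field_simps)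
  qed
  also have "\<dots> \<le> \<phi> \<eta> - \<phi> p" unfolding w_def by (rule dd_le[OF cv r B eta])
  finally show ?thesis unfolding w_def by simp
qed

theorem proposition5p3:
  fixes P :: "(real^2) set"
    and f :: "real^'n \<Rightarrow> real^2 \<Rightarrow> real^'n"
    and Q :: "(real^2) set"
    and x :: "real^2 \<Rightarrow> real^'n"
    and xL xU :: "real^'n"
    and H :: "'n set"
    and mcv mcc :: "'n \<Rightarrow> nat"
    and fcv fcc :: "'n \<Rightarrow> nat \<Rightarrow> real^'n \<Rightarrow> real^2 \<Rightarrow> real"
    and G :: "'n \<Rightarrow> real^'n"
    and i :: 'n
    and phat :: "real^2"
  defines "X \<equiv> {z :: real^'n. \<forall>l. xL $ l \<le> z $ l \<and> z $ l \<le> xU $ l}"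
  assumes P_convex: "convex P" and P_compact: "compact P"
    and Q_def: "Q = {p \<in> P. \<exists>z. f z p = 0}"
    and Q_ne: "Q \<noteq> {}"
    and x_sol: "\<forall>p\<in>Q. f (x p) p = 0"
    and x_in_X: "\<forall>p\<in>Q. x p \<in> X"
    (* f = (ftilde, h): H indexes the affine components h, the rest are ftilde *)
    and h_affine: "\<forall>k\<in>H. affine_fun (\<lambda>(z, p). f z p $ k)"
    and ftilde_not_affine: "\<forall>k. k \<notin> H \<longrightarrow> \<not> affine_fun (\<lambda>(z, p). f z p $ k)"
    (* convex relaxation ftilde^cv = max of convex C^1 pieces *)
    and cv_nonempty: "\<forall>k. k \<notin> H \<longrightarrow> mcv k \<ge> 1"
    and cv_convex: "\<forall>k j. k \<notin> H \<and> j < mcv k \<longrightarrow> convex_on (X \<times> P) (\<lambda>(z, p). fcv k j z p)"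
    and cv_C1: "\<forall>k j. k \<notin> H \<and> j < mcv k \<longrightarrow>
                  (\<exists>U. open U \<and> X \<times> P \<subseteq> U \<and> C1_on U (\<lambda>(z, p). fcv k j z p))"
    and cv_relax: "\<forall>k. k \<notin> H \<longrightarrow> (\<forall>z\<in>X. \<forall>p\<in>P.
                    Max ((\<lambda>j. fcv k j z p) ` {..<mcv k}) \<le> f z p $ k)"
    (* concave relaxation ftilde^cc = min of concave C^1 pieces *)
    and cc_nonempty: "\<forall>k. k \<notin> H \<longrightarrow> mcc k \<ge> 1"
    and cc_concave: "\<forall>k j. k \<notin> H \<and> j < mcc k \<longrightarrow> concave_on (X \<times> P) (\<lambda>(z, p). fcc k j z p)"
    and cc_C1: "\<forall>k j. k \<notin> H \<and> j < mcc k \<longrightarrow>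
                  (\<exists>U. open U \<and> X \<times> P \<subseteq> U \<and> C1_on U (\<lambda>(z, p). fcc k j z p))"
    and cc_relax: "\<forall>k. k \<notin> H \<longrightarrow> (\<forall>z\<in>X. \<forall>p\<in>P.
                    f z p $ k \<le> Min ((\<lambda>j. fcc k j z p) ` {..<mcc k}))"
    (* phat interior point of Q *)
    and phat_int: "phat \<in> interior Q"
    (* the xi-gradients G k of h_k (k in H) are linearly independent *)
    and G_grad: "\<forall>k\<in>H. \<forall>z p. GDERIV (\<lambda>\<xi>. f \<xi> p $ k) z :> G k"
    and G_indep: "\<forall>c :: 'n \<Rightarrow> real. (\<Sum>k\<in>H. c k *\<^sub>R G k) = 0 \<longrightarrow> (\<forall>k\<in>H. c k = 0)"
    (* Slater-type condition on a neighbourhood N of phat *)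
    and slater: "\<exists>N. open N \<and> phat \<in> N \<and> N \<subseteq> Q \<and>
                   (\<forall>p\<in>N. \<exists>\<xi>\<in>X. (\<forall>k\<in>H. f \<xi> p $ k = 0)
                      \<and> (\<forall>k. k \<notin> H \<longrightarrow> (\<forall>j<mcv k. fcv k j \<xi> p < 0) \<and> (\<forall>j<mcc k. - fcc k j \<xi> p < 0))
                      \<and> (\<forall>l. xL $ l - \<xi> $ l < 0) \<and> (\<forall>l. \<xi> $ l - xU $ l < 0))"
  shows "(\<forall>k::2. \<forall>\<sigma>\<in>{1, -1::real}. \<exists>l.
            has_dirderiv (xcv H f mcv fcv mcc fcc xL xU i) phat (\<sigma> *\<^sub>R axis k 1) l)
         \<and> (let \<phi> = xcv H f mcv fcv mcc fcc xL xU i;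
                s = (\<chi> k::2. (dirderiv \<phi> phat (axis k 1) - dirderiv \<phi> phat (- axis k 1)) / 2)
            in \<forall>\<eta>\<in>P. feas H f mcv fcv mcc fcc xL xU \<eta> \<noteq> {} \<longrightarrow>
                  \<phi> \<eta> \<ge> \<phi> phat + inner s (\<eta> - phat))"
proof -
  let ?F = "feas H f mcv fcv mcc fcc xL xU"
  let ?\<phi> = "xcv H f mcv fcv mcc fcc xL xU i"
  define D where "D = {p \<in> P. ?F p \<noteq> {}}"
  have feasX: "\<xi> \<in> X" if "\<xi> \<in> ?F p" for \<xi> p
    using that unfolding feas_def X_def by auto
  have comb: "(1 - t) *\<^sub>R \<xi> + t *\<^sub>R \<zeta> \<in> ?F ((1 - t) *\<^sub>R p + t *\<^sub>R q)"
    if xi: "\<xi> \<in> ?F p" and ze: "\<zeta> \<in> ?F q" and pq: "p \<in> P" "q \<in> P" and t: "0 \<le> t" "t \<le> 1"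
    for \<xi> \<zeta> p q t
  proof -
    have xX: "\<xi> \<in> X" and zX: "\<zeta> \<in> X" using xi ze feasX by auto
    let ?z = "(1 - t) *\<^sub>R \<xi> + t *\<^sub>R \<zeta>" and ?p = "(1 - t) *\<^sub>R p + t *\<^sub>R q"
    have pair: "(1 - t) *\<^sub>R (\<xi>, p) + t *\<^sub>R (\<zeta>, q) = (?z, ?p)" by simp
    have h: "f ?z ?p $ k = 0" if k: "k \<in> H" for k
    proof -
      obtain a c where ac: "\<forall>w. (\<lambda>(z, p). f z p $ k) w = inner a w + c"
        using h_affine k unfolding affine_fun_def by blast
      have fe: "f z p' $ k = inner a (z, p') + c" for z p' using ac[rule_format, of "(z, p')"] by simp
      have "f \<xi> p $ k = 0" "f \<zeta> q $ k = 0" using xi ze k unfolding feas_def by auto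
      then have "inner a (\<xi>, p) + c = 0" "inner a (\<zeta>, q) + c = 0" using fe by auto
      then have "(1 - t) * (inner a (\<xi>, p) + c) + t * (inner a (\<zeta>, q) + c) = 0" by simp
      moreover have "inner a (?z, ?p) + c = (1 - t) * (inner a (\<xi>, p) + c) + t * (inner a (\<zeta>, q) + c)"
        unfolding pair[symmetric] by (simp only: inner_add_right inner_scaleR_right) (simp add: algebra_simps)
      ultimately show ?thesis using fe by simp
    qed
    have cv: "fcv k j ?z ?p \<le> 0" if k: "k \<notin> H" and j: "j < mcv k" for k j
    proof -
      have "(\<lambda>(z, p). fcv k j z p) ((1 - t) *\<^sub>R (\<xi>, p) + t *\<^sub>R (\<zeta>, q))
          \<le> (1 - t) * (\<lambda>(z, p). fcv k j z p) (\<xi>, p) + t * (\<lambda>(z, p). fcv k j z p) (\<zeta>, q)"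
        using cv_convex k j xX zX pq t by (intro convex_onD) auto
      then have "fcv k j ?z ?p \<le> (1 - t) * fcv k j \<xi> p + t * fcv k j \<zeta> q" unfolding pair by simp
      moreover have "fcv k j \<xi> p \<le> 0" "fcv k j \<zeta> q \<le> 0" using xi ze k j unfolding feas_def by auto
      ultimately show ?thesis using t
        by (smt (verit) mult_nonneg_nonpos)
    qed
    have cc: "- fcc k j ?z ?p \<le> 0" if k: "k \<notin> H" and j: "j < mcc k" for k j
    proof -
      have "(\<lambda>(z, p). fcc k j z p) ((1 - t) *\<^sub>R (\<xi>, p) + t *\<^sub>R (\<zeta>, q))
          \<ge> (1 - t) * (\<lambda>(z, p). fcc k j z p) (\<xi>, p) + t * (\<lambda>(z, p). fcc k j z p) (\<zeta>, q)"
        using cc_concave k j xX zX pq t by (intro concave_onD) auto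
      then have "fcc k j ?z ?p \<ge> (1 - t) * fcc k j \<xi> p + t * fcc k j \<zeta> q" unfolding pair by simp
      moreover have "fcc k j \<xi> p \<ge> 0" "fcc k j \<zeta> q \<ge> 0" using xi ze k j unfolding feas_def by auto
      ultimately show ?thesis using t
        by (smt (verit) mult_nonneg_nonneg)
    qed
    have bl: "xL $ l - ?z $ l \<le> 0" for l
    proof -
      have "xL $ l \<le> \<xi> $ l" "xL $ l \<le> \<zeta> $ l" using xX zX unfolding X_def by auto
      then have "(1 - t) * xL $ l + t * xL $ l \<le> (1 - t) * \<xi> $ l + t * \<zeta> $ l"
        using t by (intro add_mono mult_left_mono) auto
      then show ?thesis by (simp add: algebra_simps)
    qed
    have bu: "?z $ l - xU $ l \<le> 0" for l
    proof -
      have "\<xi> $ l \<le> xU $ l" "\<zeta> $ l \<le> xU $ l" using xX zX unfolding X_def by auto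
      then have "(1 - t) * \<xi> $ l + t * \<zeta> $ l \<le> (1 - t) * xU $ l + t * xU $ l"
        using t by (intro add_mono mult_left_mono) auto
      then show ?thesis by (simp add: algebra_simps)
    qed
    show ?thesis unfolding feas_def using h cv cc bl bu by blast
  qed
  have bdd: "bdd_below ((\<lambda>\<xi>. \<xi> $ i) ` ?F p)" for p
    by (rule bdd_belowI2[of _ "xL $ i"]) (use feasX in \<open>auto simp: X_def\<close>)
  have Dconv: "convex D"
    unfolding D_def convex_alt
  proof (intro ballI allI impI)
    fix p q and t :: real
    assume p: "p \<in> {p \<in> P. ?F p \<noteq> {}}" and q: "q \<in> {p \<in> P. ?F p \<noteq> {}}" and t: "0 \<le> t \<and> t \<le> 1"
    then obtain \<xi> \<zeta> where "\<xi> \<in> ?F p" "\<zeta> \<in> ?F q" by auto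
    then have "?F ((1 - t) *\<^sub>R p + t *\<^sub>R q) \<noteq> {}" using comb[of \<xi> p \<zeta> q t] p q t by auto
    moreover have "(1 - t) *\<^sub>R p + t *\<^sub>R q \<in> P" using P_convex p q t unfolding convex_alt by auto
    ultimately show "(1 - t) *\<^sub>R p + t *\<^sub>R q \<in> {p \<in> P. ?F p \<noteq> {}}" by auto
  qed
  have cvD: "convex_on D ?\<phi>"
  proof (rule convex_onI[OF _ Dconv])
    fix t :: real and p q
    assume t: "0 < t" "t < 1" and p: "p \<in> D" and q: "q \<in> D"
    show "?\<phi> ((1 - t) *\<^sub>R p + t *\<^sub>R q) \<le> (1 - t) * ?\<phi> p + t * ?\<phi> q"
    proof (rule field_le_epsilon)
      fix e :: real assume e: "0 < e"
      have nep: "(\<lambda>\<xi>. \<xi> $ i) ` ?F p \<noteq> {}" and neq: "(\<lambda>\<xi>. \<xi> $ i) ` ?F q \<noteq> {}"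
        using p q unfolding D_def by auto
      obtain \<xi> where xi: "\<xi> \<in> ?F p" "\<xi> $ i < ?\<phi> p + e"
        using cInf_lessD[OF nep, of "?\<phi> p + e"] e unfolding xcv_def by auto
      obtain \<zeta> where ze: "\<zeta> \<in> ?F q" "\<zeta> $ i < ?\<phi> q + e"
        using cInf_lessD[OF neq, of "?\<phi> q + e"] e unfolding xcv_def by auto
      have PP: "p \<in> P" "q \<in> P" using p q unfolding D_def by auto
      have mem: "(1 - t) *\<^sub>R \<xi> + t *\<^sub>R \<zeta> \<in> ?F ((1 - t) *\<^sub>R p + t *\<^sub>R q)"
        using comb[OF xi(1) ze(1) PP] t by auto
      have "?\<phi> ((1 - t) *\<^sub>R p + t *\<^sub>R q) \<le> ((1 - t) *\<^sub>R \<xi> + t *\<^sub>R \<zeta>) $ i"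
        unfolding xcv_def by (rule cInf_lower[OF imageI[OF mem] bdd])
      also have "\<dots> = (1 - t) * \<xi> $ i + t * \<zeta> $ i" by simp
      also have "\<dots> \<le> (1 - t) * (?\<phi> p + e) + t * (?\<phi> q + e)"
        using xi ze t by (intro add_mono mult_left_mono) auto
      also have "\<dots> = (1 - t) * ?\<phi> p + t * ?\<phi> q + e" by (simp add: algebra_simps)
      finally show "?\<phi> ((1 - t) *\<^sub>R p + t *\<^sub>R q) \<le> (1 - t) * ?\<phi> p + t * ?\<phi> q + e" .
    qed
  qed
  obtain N where N: "open N" "phat \<in> N" "N \<subseteq> Q"
    and Ns: "\<forall>p\<in>N. \<exists>\<xi>\<in>X. (\<forall>k\<in>H. f \<xi> p $ k = 0)
                      \<and> (\<forall>k. k \<notin> H \<longrightarrow> (\<forall>j<mcv k. fcv k j \<xi> p < 0) \<and> (\<forall>j<mcc k. - fcc k j \<xi> p < 0))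
                      \<and> (\<forall>l. xL $ l - \<xi> $ l < 0) \<and> (\<forall>l. \<xi> $ l - xU $ l < 0)"
    using slater by blast
  have ND: "N \<subseteq> D"
  proof
    fix p assume p: "p \<in> N"
    then have "p \<in> P" using N Q_def by auto
    moreover obtain \<xi> where "\<xi> \<in> X" "(\<forall>k\<in>H. f \<xi> p $ k = 0)
                      \<and> (\<forall>k. k \<notin> H \<longrightarrow> (\<forall>j<mcv k. fcv k j \<xi> p < 0) \<and> (\<forall>j<mcc k. - fcc k j \<xi> p < 0))
                      \<and> (\<forall>l. xL $ l - \<xi> $ l < 0) \<and> (\<forall>l. \<xi> $ l - xU $ l < 0)"
      using Ns p by blast
    then have "\<xi> \<in> ?F p" unfolding feas_def by (auto simp: less_imp_le)
    ultimately show "p \<in> D" unfolding D_def by auto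
  qed
  obtain r where r: "r > 0" "ball phat r \<subseteq> N" using N open_contains_ball by blast
  have B: "ball phat r \<subseteq> D" using r ND by auto
  show ?thesis
  proof (intro conjI)
    show "\<forall>k::2. \<forall>\<sigma>\<in>{1, -1::real}. \<exists>l. has_dirderiv ?\<phi> phat (\<sigma> *\<^sub>R axis k 1) l"
      using dd_exists[OF cvD r(1) B] by blast
    show "let \<phi> = ?\<phi>;
                s = (\<chi> k::2. (dirderiv \<phi> phat (axis k 1) - dirderiv \<phi> phat (- axis k 1)) / 2)
            in \<forall>\<eta>\<in>P. ?F \<eta> \<noteq> {} \<longrightarrow> \<phi> \<eta> \<ge> \<phi> phat + inner s (\<eta> - phat)"
      unfolding Let_def
    proof (intro ballI impI)
      fix \<eta> assume "\<eta> \<in> P" "?F \<eta> \<noteq> {}"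
      then have "\<eta> \<in> D" unfolding D_def by auto
      then show "?\<phi> \<eta> \<ge> ?\<phi> phat + inner (\<chi> k::2. (dirderiv ?\<phi> phat (axis k 1) - dirderiv ?\<phi> phat (- axis k 1)) / 2) (\<eta> - phat)"
        by (rule dd_subgrad[OF cvD r(1) B])
    qed
  qed
qed

end
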